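(* For all real $s\ge 3$, $\log\zeta(s)\le 2^{1-s}$, where $\zeta$ is the Riemann zeta-function and $\log$ the natural logarithm. *)

theory Defs
  imports Complex_Main
begin

definition zeta :: "real \<Rightarrow> real" where
  "zeta s = (\<Sum>n. 1 / (real (Suc n)) powr s)"

end

theory Submission
  imports Defs
begin

lemma key_bound:
  fixes s x :: real
  assumes s: "s \<ge> 3" and x: "x \<ge> 3"
  shows "1 / x powr s \<le> 2 powr (-s) * (4 * (1/((x-1)*x) - 1/(x*(x+1))))"
proof -
  have xp: "x > 0" using x by simp
  have "1 / x powr s = 2 powr (-s) * (2/x) powr s"
    using xp by (simp add: powr_divide powr_minus divide_simps)
  also have "(2/x) powr s \<le> (2/x) powr 3"
    using s x by (intro powr_mono') auto
  also have "(2/x) powr (3::real) = 8 / x^3"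
    using xp by (simp add: powr_divide powr_numeral)
  also have "8 / x^3 \<le> 4 * (1/((x-1)*x) - 1/(x*(x+1)))"
  proof -
    have e: "4 * (1/((x-1)*x) - 1/(x*(x+1))) = 8 / ((x-1)*x*(x+1))"
    proof -
      have "x - 1 \<noteq> 0" "x \<noteq> 0" "x + 1 \<noteq> 0" using x by auto
      then have d: "(x-1)*x*(x+1) \<noteq> 0" by simp
      have 1: "1/((x-1)*x) = (x+1)/((x-1)*x*(x+1))" using \<open>x + 1 \<noteq> 0\<close> by simp
      have 2: "1/(x*(x+1)) = (x-1)/((x-1)*x*(x+1))" using \<open>x - 1 \<noteq> 0\<close> by simp
      show ?thesis unfolding 1 2 diff_divide_distrib[symmetric] by simp
    qed
    have "(x-1)*x*(x+1) \<le> x^3" using x by (simp add: algebra_simps power3_eq_cube)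
    moreover have "(x-1)*x*(x+1) > 0" using x by simp
    ultimately show ?thesis unfolding e by (intro divide_left_mono) (use xp in \<open>auto intro!: mult_pos_pos\<close>)
  qed
  finally show ?thesis by (simp add: mult_left_mono)
qed

theorem lemma2p3:
  fixes s :: real
  assumes "s \<ge> 3"
  shows "ln (zeta s) \<le> 2 powr (1 - s)"
proof -
  define f where "f n = 1 / (real (Suc n)) powr s" for n
  define a where "a n = 1 / ((real n + 2) * (real n + 3))" for n
  define g where "g n = 2 powr (-s) * (4 * (a n - a (Suc n)))" for n
  have fpos: "f n \<ge> 0" for n unfolding f_def by simp
  have a0: "a \<longlonglongrightarrow> 0"
  proof -
    have "(\<lambda>n. 1 / ((real n + 2) * (real n + 3))) = (\<lambda>n. inverse (real n + 2) * inverse (real n + 3))"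
      by (simp add: divide_simps)
    moreover have "(\<lambda>n. inverse (real n + 2) * inverse (real n + 3)) \<longlonglongrightarrow> 0 * 0"
    proof -
      have h: "filterlim (\<lambda>n. c + real n) at_top sequentially" for c :: real
        by (rule filterlim_tendsto_add_at_top[OF tendsto_const filterlim_real_sequentially])
      have h2: "filterlim (\<lambda>n. real n + c) at_top sequentially" for c :: real
        using h[of c] by (simp add: add.commute)
      show ?thesis by (intro tendsto_mult tendsto_inverse_0_at_top h2)
    qed
    ultimately show ?thesis unfolding a_def by simp
  qed
  have gs: "g sums (2 powr (-s) * (4 * (a 0 - 0)))"
    unfolding g_def by (intro sums_mult telescope_sums' a0)
  have fle: "f (n+2) \<le> g n" for n
  proof -
    have "f (n+2) = 1 / (real n + 3) powr s" unfolding f_def by (simp add: add_ac)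
    also have "\<dots> \<le> 2 powr (-s) * (4 * (1/((real n + 3 - 1)*(real n + 3)) - 1/((real n + 3)*(real n + 3+1))))"
      using assms by (intro key_bound) auto
    also have "\<dots> = g n" unfolding g_def a_def by (simp add: algebra_simps)
    finally show ?thesis .
  qed
  have sg: "summable g" using gs by (rule sums_summable)
  have sf2: "summable (\<lambda>n. f (n+2))"
    by (rule summable_comparison_test[OF _ sg]) (use fle fpos in auto)
  have sf: "summable f" using summable_iff_shift[of f 2] sf2 by simp
  have le: "(\<Sum>n. f (n+2)) \<le> 2 powr (-s) * (2/3)"
  proof -
    have "(\<Sum>n. f (n+2)) \<le> suminf g" by (rule suminf_le[OF _ sf2 sg]) (use fle in auto)
    also have "suminf g = 2 powr (-s) * (2/3)" using gs sums_unique by (force simp: a_def)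
    finally show ?thesis .
  qed
  have split: "suminf f = (\<Sum>n. f (n+2)) + (\<Sum>i<2. f i)"
    using suminf_split_initial_segment[OF sf, of 2] by simp
  have f0: "f 0 = 1" and f1: "f 1 = 2 powr (-s)" unfolding f_def by (auto simp: powr_minus divide_simps)
  have z: "zeta s = suminf f" unfolding zeta_def f_def by simp
  have zeq: "zeta s = 1 + 2 powr (-s) + (\<Sum>n. f (n+2))"
    using z split f0 f1 by (simp add: numeral_2_eq_2)
  have nn: "(\<Sum>n. f (n+2)) \<ge> 0" using sf2 fpos by (intro suminf_nonneg) auto
  have "2 powr (-s) > 0" by simp
  then have zpos: "zeta s > 0" using zeq nn by linarith
  have "ln (zeta s) \<le> zeta s - 1" using zpos by (rule ln_le_minus_one)
  also have "\<dots> \<le> 2 powr (-s) * 2" using zeq le \<open>2 powr (-s) > 0\<close> by linarith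
  also have "\<dots> = 2 powr (1 - s)" by (simp add: powr_diff powr_minus divide_simps)
  finally show ?thesis .
qed

end
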